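(* In the setting of the context, for each particle $j$: for every $0<p<\tfrac12$ and every $\varepsilon>0$, $$\lim_{i\to\infty}\mathrm{Prob}\Big(\|\widetilde{\mathcal{P}}\tilde\theta_i^{(j)}\|\ge\frac{\varepsilon}{i^p}\Big)=0,$$ so $\|\widetilde{\mathcal{P}}\tilde\theta_i^{(j)}\|\to0$ in probability at a rate arbitrarily close to $1/\sqrt i$; moreover $\widetilde{\mathcal{P}}\tilde\theta_i^{(j)}\to0$ almost surely as $i\to\infty$.
   Context: Let $H\in\mathbb{R}^{n\times d}$ have rank $h$, $\Sigma\in\mathbb{R}^{n\times n}$ symmetric positive definite, $y\in\mathbb{R}^n$, $J\ge2$, and a fixed initial ensemble $v_0^{(1)},\dots,v_0^{(J)}$ with empirical covariance $\Gamma_0=\frac1{J-1}\sum_j(v_0^{(j)}-\bar v_0)(v_0^{(j)}-\bar v_0)^\top$. Let $\varepsilon_i^{(j)}$ ($i\ge0$, $1\le j\le J$) be i.i.d. $\mathcal{N}(0,\Sigma)$. Define $C_0=H\Gamma_0H^\top$, $C_{i+1}=\Sigma-\Sigma(C_i+\Sigma)^{-1}\Sigma$, $\widetilde{\mathcal{M}}_i=\Sigma(C_i+\Sigma)^{-1}$, $\tilde\theta_0^{(j)}=Hv_0^{(j)}-y$, $\tilde\theta_{i+1}^{(j)}=\widetilde{\mathcal{M}}_i\tilde\theta_i^{(j)}+(I-\widetilde{\mathcal{M}}_i)\varepsilon_i^{(j)}$. Let $r$ be the number of positive eigenvalues of $C_0\tilde w=\tilde\delta\Sigma\tilde w$, and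 $\tilde w_1,\dots,\tilde w_n$ a basis of $\mathbb{R}^n$ with $\tilde w_k^\top\Sigma\tilde w_l$ equal to $1$ if $k=l$, $0$ otherwise, each a generalized eigenvector of $(C_i,\Sigma)$ for all $i$, with $\tilde w_1,\dots,\tilde w_r\in\mathsf{Ran}(\Sigma^{-1}H)$ having positive eigenvalues, $\tilde w_{r+1},\dots,\tilde w_h\in\mathsf{Ran}(\Sigma^{-1}H)$ eigenvalue zero, $\tilde w_{h+1},\dots,\tilde w_n\in\mathsf{Ker}(H^\top)$. $\widetilde{\mathcal{P}}=\Sigma\widetilde W_{1:r}\widetilde W_{1:r}^\top$ where $\widetilde W_{1:r}=[\tilde w_1,\dots,\tilde w_r]$. *)

theory Defs
  imports "HOL-Analysis.Analysis" "HOL-Probability.Probability"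
begin

definition outer :: "real^'n \<Rightarrow> real^'m \<Rightarrow> real^'m^'n" where
  "outer u v = (\<chi> a b. u $ a * v $ b)"

definition spd :: "real^'n^'n \<Rightarrow> bool" where
  "spd S \<longleftrightarrow> transpose S = S \<and> (\<forall>x. x \<noteq> 0 \<longrightarrow> x \<bullet> (S *v x) > 0)"

definition gauss_density :: "real^'n^'n \<Rightarrow> real^'n \<Rightarrow> real" where
  "gauss_density S x =
     exp (- (x \<bullet> (matrix_inv S *v x)) / 2) / sqrt ((2 * pi) ^ CARD('n) * det S)"

definition ens_mean :: "nat \<Rightarrow> (nat \<Rightarrow> real^'d) \<Rightarrow> real^'d" where
  "ens_mean J v = (1 / real J) *\<^sub>R (\<Sum>j=1..J. v j)"

definition ens_cov :: "nat \<Rightarrow> (nat \<Rightarrow> real^'d) \<Rightarrow> real^'d^'d" where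
  "ens_cov J v = (1 / (real J - 1)) *\<^sub>R
     (\<Sum>j=1..J. outer (v j - ens_mean J v) (v j - ens_mean J v))"

primrec Cseq :: "real^'d^'n \<Rightarrow> real^'n^'n \<Rightarrow> real^'d^'d \<Rightarrow> nat \<Rightarrow> real^'n^'n" where
  "Cseq H S G 0 = H ** G ** transpose H"
| "Cseq H S G (Suc i) = S - S ** matrix_inv (Cseq H S G i + S) ** S"

definition Mt :: "real^'d^'n \<Rightarrow> real^'n^'n \<Rightarrow> real^'d^'d \<Rightarrow> nat \<Rightarrow> real^'n^'n" where
  "Mt H S G i = S ** matrix_inv (Cseq H S G i + S)"

text \<open>The random iterates tilde theta_i^(j)(omega); eps i j omega is the noise.\<close>
primrec theta :: "real^'d^'n \<Rightarrow> real^'n^'n \<Rightarrow> real^'n \<Rightarrow> nat \<Rightarrow> (nat \<Rightarrow> real^'d)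
    \<Rightarrow> (nat \<Rightarrow> nat \<Rightarrow> 'a \<Rightarrow> real^'n) \<Rightarrow> nat \<Rightarrow> nat \<Rightarrow> 'a \<Rightarrow> real^'n" where
  "theta H S y J v eps 0 j \<omega> = H *v v j - y"
| "theta H S y J v eps (Suc i) j \<omega> =
     Mt H S (ens_cov J v) i *v theta H S y J v eps i j \<omega>
     + (mat 1 - Mt H S (ens_cov J v) i) *v eps i j \<omega>"

end

theory Submission
  imports Defs "HOL-Probability.Probability"
begin

lemma invertible_inv:
  fixes A :: "real^'n^'n"
  assumes "invertible A"
  shows "A ** matrix_inv A = mat 1" "matrix_inv A ** A = mat 1"
  using someI_ex[OF assms[unfolded invertible_def]] unfolding matrix_inv_def by auto

lemma outer_mult: "outer u v *v x = (v \<bullet> x) *\<^sub>R u"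
  by (simp add: outer_def matrix_vector_mult_def inner_vec_def vec_eq_iff sum_distrib_left mult_ac)

lemma sum_mat_vec: "finite A \<Longrightarrow> (\<Sum>k\<in>A. f k) *v x = (\<Sum>k\<in>A. f k *v x)"
  by (induction A rule: finite_induct) (auto simp: matrix_vector_mult_add_rdistrib)

lemma inner_mat: "(w::real^_) \<bullet> ((H::real^_^_) *v u) = (transpose H *v w) \<bullet> u"
  by (subst transpose_matrix_vector) (rule dot_lmul_matrix[symmetric])

lemma spd_inj:
  fixes S :: "real^'n^'n"
  assumes "spd S" "S *v x = 0" shows "x = 0"
proof (rule ccontr)
  assume "x \<noteq> 0"
  then have "x \<bullet> (S *v x) > 0" using assms(1) unfolding spd_def by blast
  then show False using assms(2) by simp
qed

lemma spd_invertible: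
  fixes S :: "real^'n^'n"
  assumes "spd S" shows "invertible S"
proof -
  have "\<exists>B. B ** S = mat 1"
    using matrix_left_invertible_injective spd_inj[OF assms]
    by (meson matrix_left_invertible_ker)
  then show ?thesis using invertible_left_inverse by blast
qed

lemma spd_surj:
  fixes S :: "real^'n^'n"
  assumes "spd S" shows "surj ((*v) S)"
proof -
  have "S ** matrix_inv S = mat 1" using spd_invertible[OF assms] invertible_inv by blast
  then show ?thesis using matrix_right_invertible_surjective by blast
qed

lemma alg_step: fixes d :: real and n :: nat assumes "d > 0"
  shows "(d / (1 + real n * d)) / (1 + d / (1 + real n * d)) = d / (1 + real (Suc n) * d)"
proof -
  define p where "p = 1 + real n * d"
  have p: "p > 0" using assms unfolding p_def by (simp add: add_pos_nonneg)
  have e: "1 + d / p = (p + d) / p" using p by (simp add: field_simps)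
  have "(d / p) / (1 + d / p) = d / (p + d)" unfolding e using p assms by simp
  moreover have "p + d = 1 + real (Suc n) * d" unfolding p_def by (simp add: algebra_simps)
  ultimately show ?thesis unfolding p_def by simp
qed

context
  fixes H :: "real^'d^'n" and S :: "real^'n^'n" and G :: "real^'d^'d"
    and w :: "nat \<Rightarrow> real^'n" and K :: "nat set"
  assumes S: "spd S"
    and Gpsd: "\<And>z. 0 \<le> z \<bullet> (G *v z)"
    and orth: "\<And>k l. k \<in> K \<Longrightarrow> l \<in> K \<Longrightarrow> w k \<bullet> (S *v w l) = (if k = l then 1 else 0)"
    and basis: "span (w ` K) = UNIV"
    and eig: "\<And>k i. k \<in> K \<Longrightarrow> \<exists>\<delta>. Cseq H S G i *v w k = \<delta> *\<^sub>R (S *v w k)"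
begin

lemma eigd: "k \<in> K \<Longrightarrow> Cseq H S G i *v w k = (w k \<bullet> (Cseq H S G i *v w k)) *\<^sub>R (S *v w k)"
proof -
  assume k: "k \<in> K"
  obtain \<delta> where d: "Cseq H S G i *v w k = \<delta> *\<^sub>R (S *v w k)" using eig[OF k] by blast
  have "w k \<bullet> (Cseq H S G i *v w k) = \<delta>" using orth[OF k k] by (simp add: d)
  then show ?thesis using d by simp
qed

lemma d0_nonneg: "0 \<le> w k \<bullet> (Cseq H S G 0 *v w k)"
proof -
  have "Cseq H S G 0 *v w k = H *v (G *v (transpose H *v w k))"
    by (simp only: matrix_vector_mul_assoc matrix_mul_assoc Cseq.simps)
  moreover have "w k \<bullet> (H *v (G *v (transpose H *v w k))) =
     (transpose H *v w k) \<bullet> (G *v (transpose H *v w k))" by (rule inner_mat)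
  ultimately show ?thesis using Gpsd[of "transpose H *v w k"] by simp
qed

lemma inv_step:
  assumes nn: "\<forall>k\<in>K. 0 \<le> w k \<bullet> (Cseq H S G i *v w k)"
  shows "invertible (Cseq H S G i + S)"
proof -
  let ?A = "Cseq H S G i + S"
  have "(*v) S ` (w ` K) \<subseteq> range ((*v) ?A)"
  proof
    fix x assume "x \<in> (*v) S ` (w ` K)"
    then obtain k where k: "k \<in> K" and x: "x = S *v w k" by auto
    let ?d = "w k \<bullet> (Cseq H S G i *v w k)"
    have "?A *v ((1 / (1 + ?d)) *\<^sub>R w k) = (1 / (1 + ?d)) *\<^sub>R (?A *v w k)"
      by (simp add: matrix_vector_mult_scaleR)
    also have "?A *v w k = (1 + ?d) *\<^sub>R (S *v w k)"
      using eigd[OF k, of i] by (simp add: matrix_vector_mult_add_rdistrib algebra_simps)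
    moreover have "1 + ?d > 0" using nn k by auto
    ultimately have "?A *v ((1 / (1 + ?d)) *\<^sub>R w k) = x"
      using x by simp
    then show "x \<in> range ((*v) ?A)" by (metis rangeI)
  qed
  moreover have "subspace (range ((*v) ?A))"
    by (simp add: linear_subspace_image matrix_vector_mul_linear subspace_UNIV)
  ultimately have "span ((*v) S ` (w ` K)) \<subseteq> range ((*v) ?A)"
    by (rule span_minimal)
  moreover have "span ((*v) S ` (w ` K)) = UNIV"
    using linear_span_image[OF matrix_vector_mul_linear, of S "w ` K"] basis spd_surj[OF S] by simp
  ultimately have "surj ((*v) ?A)" by auto
  then obtain B where "?A ** B = mat 1" using matrix_right_invertible_surjective by blast
  then show ?thesis using matrix_left_right_inverse invertible_def by blast
qed

lemma key_span:
  assumes k: "k \<in> K"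
  shows "w k \<bullet> ((Cseq H S G i + S) *v u) = (1 + w k \<bullet> (Cseq H S G i *v w k)) * (w k \<bullet> (S *v u))"
proof -
  have "u \<in> span (w ` K)" using basis by simp
  then show ?thesis
    apply (induction rule: span_induct_alt)
     apply simp
    subgoal for c x y
    proof -
    assume 2: "x \<in> w ` K" "w k \<bullet> ((Cseq H S G i + S) *v y) = (1 + w k \<bullet> (Cseq H S G i *v w k)) * (w k \<bullet> (S *v y))"
    then obtain l where l: "l \<in> K" and x: "x = w l" by auto
    have e: "(Cseq H S G i + S) *v w l = (1 + w l \<bullet> (Cseq H S G i *v w l)) *\<^sub>R (S *v w l)"
      using eigd[OF l, of i] by (simp add: matrix_vector_mult_add_rdistrib algebra_simps)
    have "w k \<bullet> ((Cseq H S G i + S) *v (c *\<^sub>R x + y)) =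
        c * (w k \<bullet> ((Cseq H S G i + S) *v w l)) + w k \<bullet> ((Cseq H S G i + S) *v y)"
      by (simp add: x matrix_vector_right_distrib matrix_vector_mult_scaleR inner_add_right)
    also have "\<dots> = c * (1 + w k \<bullet> (Cseq H S G i *v w k)) * (w k \<bullet> (S *v w l)) +
        (1 + w k \<bullet> (Cseq H S G i *v w k)) * (w k \<bullet> (S *v y))"
      using 2(2) orth[OF k l] by (simp add: e)
    also have "\<dots> = (1 + w k \<bullet> (Cseq H S G i *v w k)) * (w k \<bullet> (S *v (c *\<^sub>R x + y)))"
      by (simp add: x matrix_vector_right_distrib matrix_vector_mult_scaleR inner_add_right algebra_simps)
    finally show ?thesis .
  qed
  done
qed

lemma all_step:
  assumes nn: "\<forall>k\<in>K. 0 \<le> w k \<bullet> (Cseq H S G i *v w k)" and k: "k \<in> K"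
  shows "w k \<bullet> (Mt H S G i *v x) = (w k \<bullet> x) / (1 + w k \<bullet> (Cseq H S G i *v w k))"
    and "w k \<bullet> (Cseq H S G (Suc i) *v w k) =
          w k \<bullet> (Cseq H S G i *v w k) / (1 + w k \<bullet> (Cseq H S G i *v w k))"
proof -
  let ?A = "Cseq H S G i + S"
  let ?d = "w k \<bullet> (Cseq H S G i *v w k)"
  have inv: "invertible ?A" by (rule inv_step[OF nn])
  have dpos: "1 + ?d > 0" using nn k by auto
  have AR: "?A *v (matrix_inv ?A *v x) = x" for x
    using invertible_inv(1)[OF inv] by (simp add: matrix_vector_mul_assoc)
  have AL: "matrix_inv ?A *v (?A *v x) = x" for x
    using invertible_inv(2)[OF inv] by (simp add: matrix_vector_mul_assoc)
  have "w k \<bullet> (Mt H S G i *v x) = w k \<bullet> (S *v (matrix_inv ?A *v x))"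
    by (simp add: Mt_def matrix_vector_mul_assoc)
  also have "\<dots> = (w k \<bullet> (?A *v (matrix_inv ?A *v x))) / (1 + ?d)"
    using key_span[OF k, of i "matrix_inv ?A *v x"] dpos by simp
  finally show "w k \<bullet> (Mt H S G i *v x) = (w k \<bullet> x) / (1 + ?d)" by (simp add: AR)
  have "?A *v ((1 / (1 + ?d)) *\<^sub>R w k) = (1 / (1 + ?d)) *\<^sub>R (?A *v w k)"
    by (simp add: matrix_vector_mult_scaleR)
  also have "?A *v w k = (1 + ?d) *\<^sub>R (S *v w k)"
    using eigd[OF k, of i] by (simp add: matrix_vector_mult_add_rdistrib algebra_simps)
  finally have "?A *v ((1 / (1 + ?d)) *\<^sub>R w k) = S *v w k" using dpos by simp
  then have mi: "matrix_inv ?A *v (S *v w k) = (1 / (1 + ?d)) *\<^sub>R w k"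
    using AL by metis
  have "Cseq H S G (Suc i) *v w k = S *v w k - S *v (matrix_inv ?A *v (S *v w k))"
    by (simp add: matrix_vector_mult_diff_rdistrib matrix_vector_mul_assoc matrix_mul_assoc)
  also have "\<dots> = S *v w k - (1 / (1 + ?d)) *\<^sub>R (S *v w k)"
    by (simp add: mi matrix_vector_mult_scaleR)
  finally have "w k \<bullet> (Cseq H S G (Suc i) *v w k) = 1 - 1 / (1 + ?d)"
    using orth[OF k k] by (simp add: inner_diff_right)
  also have "\<dots> = ?d / (1 + ?d)" using dpos by (simp add: field_simps)
  finally show "w k \<bullet> (Cseq H S G (Suc i) *v w k) = ?d / (1 + ?d)" .
qed

lemma all_nonneg: "\<forall>k\<in>K. 0 \<le> w k \<bullet> (Cseq H S G i *v w k)"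
proof (induction i)
  case 0
  then show ?case using d0_nonneg by blast
next
  case (Suc i)
  show ?case using all_step(2)[OF Suc] Suc by auto
qed

lemma Mt_coef: "k \<in> K \<Longrightarrow>
   w k \<bullet> (Mt H S G i *v x) = (w k \<bullet> x) / (1 + w k \<bullet> (Cseq H S G i *v w k))"
  using all_step(1)[OF all_nonneg] by blast

lemma d_succ: "k \<in> K \<Longrightarrow>
   w k \<bullet> (Cseq H S G (Suc i) *v w k) = w k \<bullet> (Cseq H S G i *v w k) / (1 + w k \<bullet> (Cseq H S G i *v w k))"
  using all_step(2)[OF all_nonneg] by blast

lemma d_formula:
  assumes k: "k \<in> K" and pos: "0 < w k \<bullet> (Cseq H S G 0 *v w k)"
  shows "w k \<bullet> (Cseq H S G i *v w k) = (w k \<bullet> (Cseq H S G 0 *v w k)) / (1 + real i * (w k \<bullet> (Cseq H S G 0 *v w k)))"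
proof (induction i)
  case 0 then show ?case by simp
next
  case (Suc i)
  let ?d = "w k \<bullet> (Cseq H S G 0 *v w k)"
  have p: "1 + real i * ?d > 0" using pos by (simp add: add_pos_nonneg)
  have "w k \<bullet> (Cseq H S G (Suc i) *v w k) = (?d / (1 + real i * ?d)) / (1 + ?d / (1 + real i * ?d))"
    using d_succ[OF k, of i] Suc by simp
  also have "\<dots> = ?d / (1 + real (Suc i) * ?d)" by (rule alg_step[OF pos])
  finally show ?case .
qed

end

lemma alg_step2: fixes d a T Z :: real and n :: nat assumes "d > 0"
  shows "((a + d * T) / (1 + real n * d)) / (1 + d / (1 + real n * d)) + Z - Z / (1 + d / (1 + real n * d))
     = (a + d * (T + Z)) / (1 + real (Suc n) * d)"
proof -
  define p where "p = 1 + real n * d"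
  have p: "p > 0" using assms unfolding p_def by (simp add: add_pos_nonneg)
  have e: "1 + d / p = (p + d) / p" using p by (simp add: field_simps)
  have pd: "p + d > 0" using p assms by simp
  have 1: "((a + d * T) / p) / ((p + d) / p) = (a + d * T) / (p + d)" using p by simp
  have 2: "Z / ((p + d) / p) = Z * p / (p + d)" by simp
  have 3: "Z - Z * p / (p + d) = Z * d / (p + d)" using pd by (simp add: field_simps)
  have "((a + d * T) / p) / (1 + d / p) + Z - Z / (1 + d / p) = (a + d * T) / (p + d) + Z * d / (p + d)"
    unfolding e 1 2 using 3 by simp
  also have "\<dots> = (a + d * (T + Z)) / (p + d)" by (simp add: add_divide_distrib[symmetric] algebra_simps)
  finally have "((a + d * T) / p) / (1 + d / p) + Z - Z / (1 + d / p) = (a + d * (T + Z)) / (p + d)" .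
  moreover have "p + d = 1 + real (Suc n) * d" unfolding p_def by (simp add: algebra_simps)
  ultimately show ?thesis unfolding p_def by simp
qed

lemma alpha_formula:
  fixes H :: "real^'d^'n" and S :: "real^'n^'n" and v0 :: "nat \<Rightarrow> real^'d"
    and w :: "nat \<Rightarrow> real^'n" and K :: "nat set"
    and eps :: "nat \<Rightarrow> nat \<Rightarrow> 'a \<Rightarrow> real^'n"
  assumes S: "spd S"
    and Gpsd: "\<And>z. 0 \<le> z \<bullet> (ens_cov J v0 *v z)"
    and orth: "\<And>k l. k \<in> K \<Longrightarrow> l \<in> K \<Longrightarrow> w k \<bullet> (S *v w l) = (if k = l then 1 else 0)"
    and basis: "span (w ` K) = UNIV"
    and eig: "\<And>k i. k \<in> K \<Longrightarrow> \<exists>\<delta>. Cseq H S (ens_cov J v0) i *v w k = \<delta> *\<^sub>R (S *v w k)"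
    and k: "k \<in> K" and pos: "0 < w k \<bullet> (Cseq H S (ens_cov J v0) 0 *v w k)"
  shows "w k \<bullet> theta H S y J v0 eps i j \<omega> =
     (w k \<bullet> (H *v v0 j - y) + (w k \<bullet> (Cseq H S (ens_cov J v0) 0 *v w k)) * (\<Sum>l<i. w k \<bullet> eps l j \<omega>))
       / (1 + real i * (w k \<bullet> (Cseq H S (ens_cov J v0) 0 *v w k)))"
proof (induction i)
  case 0
  then show ?case by simp
next
  case (Suc i)
  let ?G = "ens_cov J v0"
  let ?d = "w k \<bullet> (Cseq H S ?G 0 *v w k)"
  have dI: "w k \<bullet> (Cseq H S ?G i *v w k) = ?d / (1 + real i * ?d)"
    by (rule d_formula[OF S Gpsd orth basis eig k pos]) auto
  have M: "w k \<bullet> (Mt H S ?G i *v x) = (w k \<bullet> x) / (1 + ?d / (1 + real i * ?d))" for x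
    using Mt_coef[OF S Gpsd orth basis eig k, of i x] dI by simp
  have "w k \<bullet> theta H S y J v0 eps (Suc i) j \<omega> =
     w k \<bullet> (Mt H S ?G i *v theta H S y J v0 eps i j \<omega>) + w k \<bullet> eps i j \<omega>
       - w k \<bullet> (Mt H S ?G i *v eps i j \<omega>)"
    by (simp add: inner_add_right inner_diff_right matrix_vector_mult_diff_rdistrib)
  also have "\<dots> = (w k \<bullet> theta H S y J v0 eps i j \<omega>) / (1 + ?d / (1 + real i * ?d))
       + w k \<bullet> eps i j \<omega> - (w k \<bullet> eps i j \<omega>) / (1 + ?d / (1 + real i * ?d))"
    by (simp add: M)
  also have "\<dots> = (w k \<bullet> (H *v v0 j - y) + ?d * ((\<Sum>l<i. w k \<bullet> eps l j \<omega>) + w k \<bullet> eps i j \<omega>))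
       / (1 + real (Suc i) * ?d)"
    unfolding Suc by (rule alg_step2[OF pos])
  finally show ?case by simp
qed

lemma lborel_integrable_scale:
  fixes f :: "'a::euclidean_space \<Rightarrow> real"
  assumes f: "integrable lborel f" and c: "c \<noteq> 0"
  shows "integrable lborel (\<lambda>x. f (c *\<^sub>R x))"
proof -
  have fm[measurable]: "f \<in> borel_measurable borel"
    using borel_measurable_integrable[OF f] by simp
  have T[measurable]: "(\<lambda>x::'a. 0 + c *\<^sub>R x) \<in> borel \<rightarrow>\<^sub>M borel" by simp
  have "integrable (density (distr lborel borel (\<lambda>x::'a. 0 + c *\<^sub>R x)) (\<lambda>_. ennreal (\<bar>c\<bar> ^ DIM('a)))) f"
    using f lborel_affine[OF c, of "0::'a"] by simp
  then have "integrable (distr lborel borel (\<lambda>x::'a. 0 + c *\<^sub>R x)) (\<lambda>x. (\<bar>c\<bar> ^ DIM('a)) *\<^sub>R f x)"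
    by (subst (asm) integrable_density) auto
  then have "integrable lborel (\<lambda>x. (\<bar>c\<bar> ^ DIM('a)) * f (c *\<^sub>R x))"
    by (subst (asm) integrable_distr_eq) auto
  then show ?thesis using c by (simp add: integrable_mult_left_iff)
qed

lemma lborel_integral_neg:
  fixes f :: "'a::euclidean_space \<Rightarrow> real"
  assumes fm[measurable]: "f \<in> borel_measurable borel"
  shows "(\<integral>x. f (- x) \<partial>lborel) = (\<integral>x. f x \<partial>lborel)"
proof -
  have c: "(-1::real) \<noteq> 0" by simp
  have T[measurable]: "(\<lambda>x::'a. 0 + (-1) *\<^sub>R x) \<in> borel \<rightarrow>\<^sub>M borel" by simp
  have "(\<integral>x. f x \<partial>lborel) = (\<integral>x. f x \<partial>(density (distr lborel borel (\<lambda>x::'a. 0 + (-1) *\<^sub>R x)) (\<lambda>_. ennreal (\<bar>-1::real\<bar> ^ DIM('a)))))"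
    using lborel_affine[OF c, of "0::'a"] by simp
  also have "\<dots> = (\<integral>x. f x \<partial>(distr lborel borel (\<lambda>x::'a. 0 + (-1) *\<^sub>R x)))"
    by (subst integral_density) auto
  also have "\<dots> = (\<integral>x. f (- x) \<partial>lborel)"
    by (subst integral_distr) auto
  finally show ?thesis by simp
qed

context
  fixes S :: "real^'n^'n"
  assumes S: "spd S"
begin

lemma Sinv: "S *v (matrix_inv S *v x) = x" "matrix_inv S *v (S *v x) = x"
  using invertible_inv[OF spd_invertible[OF S]] by (simp_all add: matrix_vector_mul_assoc)

lemma q_pos: "x \<noteq> 0 \<Longrightarrow> 0 < x \<bullet> (matrix_inv S *v x)"
proof -
  assume x: "x \<noteq> 0"
  let ?y = "matrix_inv S *v x"
  have "?y \<noteq> 0" using x Sinv(1)[of x] by auto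
  then have "0 < ?y \<bullet> (S *v ?y)" using S unfolding spd_def by blast
  then show ?thesis by (simp add: Sinv inner_commute)
qed

lemma q_hom: "(c *\<^sub>R x) \<bullet> (matrix_inv S *v (c *\<^sub>R x)) = c\<^sup>2 * (x \<bullet> (matrix_inv S *v x))"
  by (simp add: matrix_vector_mult_scaleR power2_eq_square)

lemma q_cont: "continuous_on A (\<lambda>x. x \<bullet> (matrix_inv S *v x))"
  by (intro continuous_on_inner continuous_on_id linear_continuous_on_compose[OF continuous_on_id] matrix_vector_mul_linear)

lemma q_lower: "\<exists>lam>0. \<forall>x. lam * (norm x)\<^sup>2 \<le> x \<bullet> (matrix_inv S *v x)"
proof -
  have "sphere (0::real^'n) 1 \<noteq> {}" by (simp add: sphere_eq_empty)
  then obtain u where u: "u \<in> sphere 0 1" and umin: "\<forall>y\<in>sphere 0 1. u \<bullet> (matrix_inv S *v u) \<le> y \<bullet> (matrix_inv S *v y)"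
    using continuous_attains_inf[OF compact_sphere _ q_cont] by blast
  let ?lam = "u \<bullet> (matrix_inv S *v u)"
  have lp: "?lam > 0" using u by (intro q_pos) auto
  have "?lam * (norm x)\<^sup>2 \<le> x \<bullet> (matrix_inv S *v x)" for x
  proof (cases "x = 0")
    case True then show ?thesis by simp
  next
    case False
    let ?v = "(1 / norm x) *\<^sub>R x"
    have "?v \<in> sphere 0 1" using False by simp
    then have "?lam \<le> ?v \<bullet> (matrix_inv S *v ?v)" using umin by blast
    also have "\<dots> = (1 / norm x)\<^sup>2 * (x \<bullet> (matrix_inv S *v x))" by (rule q_hom)
    finally have "?lam \<le> (1 / norm x)\<^sup>2 * (x \<bullet> (matrix_inv S *v x))" .
    then have "?lam * (norm x)\<^sup>2 \<le> (1 / norm x)\<^sup>2 * (x \<bullet> (matrix_inv S *v x)) * (norm x)\<^sup>2"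
      by (rule mult_right_mono) simp
    also have "\<dots> = x \<bullet> (matrix_inv S *v x)" using False by (simp add: field_simps)
    finally show ?thesis .
  qed
  then show ?thesis using lp by blast
qed

end

lemma x4_nonneg: fixes x :: real shows "0 \<le> x ^ 4"
proof -
  have "x ^ 4 = (x ^ 2) ^ 2" by (simp add: power_mult[symmetric])
  then show ?thesis by simp
qed

lemma pow_le_4: fixes x :: real assumes "k \<le> 4" shows "\<bar>x ^ k\<bar> \<le> 1 + x ^ 4"
proof (cases "\<bar>x\<bar> \<le> 1")
  case True
  then have "\<bar>x\<bar> ^ k \<le> 1" by (simp add: power_le_one)
  moreover have "0 \<le> x ^ 4" by (rule x4_nonneg)
  ultimately have "\<bar>x\<bar> ^ k \<le> 1 + x ^ 4" by linarith
  then show ?thesis by (simp add: power_abs)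
next
  case False
  then have "\<bar>x\<bar> ^ k \<le> \<bar>x\<bar> ^ 4" using assms by (intro power_increasing) auto
  also have "\<bar>x\<bar> ^ 4 = x ^ 4" using x4_nonneg[of x] by (simp add: power_abs[symmetric])
  finally show ?thesis by (simp add: power_abs)
qed

context prob_space
begin

lemma int_pow_le:
  fixes X :: "'a \<Rightarrow> real"
  assumes X[measurable]: "random_variable borel X" and i4: "integrable M (\<lambda>\<omega>. X \<omega> ^ 4)" and k: "k \<le> 4"
  shows "integrable M (\<lambda>\<omega>. X \<omega> ^ k)"
proof (rule Bochner_Integration.integrable_bound)
  show "integrable M (\<lambda>\<omega>. 1 + X \<omega> ^ 4)" using i4 by simp
  show "(\<lambda>\<omega>. X \<omega> ^ k) \<in> borel_measurable M" by measurable
  show "AE \<omega> in M. norm (X \<omega> ^ k) \<le> norm (1 + X \<omega> ^ 4)"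
    using pow_le_4[OF k] x4_nonneg by simp
qed

lemma indep_pow:
  fixes X Y :: "'a \<Rightarrow> real"
  assumes ind: "indep_var borel X borel Y" and iX: "integrable M (\<lambda>\<omega>. X \<omega> ^ a)" and iY: "integrable M (\<lambda>\<omega>. Y \<omega> ^ b)"
  shows "integrable M (\<lambda>\<omega>. X \<omega> ^ a * Y \<omega> ^ b)"
    "expectation (\<lambda>\<omega>. X \<omega> ^ a * Y \<omega> ^ b) = expectation (\<lambda>\<omega>. X \<omega> ^ a) * expectation (\<lambda>\<omega>. Y \<omega> ^ b)"
proof -
  have i: "indep_var borel ((\<lambda>x. x ^ a) \<circ> X) borel ((\<lambda>x. x ^ b) \<circ> Y)"
    by (rule indep_var_compose[OF ind]) auto
  then have i': "indep_var borel (\<lambda>\<omega>. X \<omega> ^ a) borel (\<lambda>\<omega>. Y \<omega> ^ b)" by (simp add: comp_def)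
  show "integrable M (\<lambda>\<omega>. X \<omega> ^ a * Y \<omega> ^ b)" by (rule indep_var_integrable[OF i' iX iY])
  show "expectation (\<lambda>\<omega>. X \<omega> ^ a * Y \<omega> ^ b) = expectation (\<lambda>\<omega>. X \<omega> ^ a) * expectation (\<lambda>\<omega>. Y \<omega> ^ b)"
    by (rule indep_var_lebesgue_integral[OF i' iX iY])
qed

end

lemma exp_bound_aux:
  fixes t lam :: real assumes t: "0 \<le> t" and lam: "lam > 0"
  shows "(4 * t / lam)\<^sup>2 * exp (- t) \<le> 32 / lam\<^sup>2"
proof -
  have "t\<^sup>2 / 2 \<le> exp t" using exp_lower_Taylor_quadratic[OF t] t by linarith
  then have "t\<^sup>2 \<le> 2 * exp t" by simp
  then have "t\<^sup>2 * exp (- t) \<le> 2 * exp t * exp (- t)" by (rule mult_right_mono) simp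
  also have "\<dots> = 2" by (simp add: exp_minus)
  finally have h: "t\<^sup>2 * exp (- t) \<le> 2" .
  have "(4 * t / lam)\<^sup>2 * exp (- t) = 16 / lam\<^sup>2 * (t\<^sup>2 * exp (- t))"
    by (simp add: power2_eq_square field_simps)
  also have "\<dots> \<le> 16 / lam\<^sup>2 * 2" using h lam by (intro mult_left_mono) auto
  finally show ?thesis by simp
qed

context
  fixes S :: "real^'n^'n" and M :: "'a measure" and X :: "'a \<Rightarrow> real^'n"
  assumes S: "spd S" and P: "prob_space M"
    and D: "distributed M lborel X (\<lambda>x. ennreal (gauss_density S x))"
begin

definition "gq x = x \<bullet> (matrix_inv S *v x)"
definition "gs = sqrt ((2 * pi) ^ CARD('n) * det S)"

lemma g_eq: "gauss_density S x = exp (- gq x / 2) / gs"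
  unfolding gauss_density_def gq_def gs_def by simp

lemma gs_pos: "gs > 0"
proof (rule ccontr)
  assume "\<not> gs > 0"
  then have "gauss_density S x \<le> 0" for x unfolding g_eq by (simp add: divide_nonneg_nonpos)
  then have z: "(\<lambda>x. ennreal (gauss_density S x)) = (\<lambda>_. 0)" by (simp add: fun_eq_iff ennreal_eq_0_iff)
  have Xm: "X \<in> measurable M lborel" using D by (rule distributed_measurable)
  have "emeasure (distr M lborel X) (space lborel) = emeasure M (space M)"
    using Xm by (simp add: emeasure_distr)
  also have "\<dots> = 1" using P by (simp add: prob_space.emeasure_space_1)
  finally have 1: "emeasure (distr M lborel X) (space lborel) = 1" .
  have "distr M lborel X = density lborel (\<lambda>_. 0)"
    using distributed_distr_eq_density[OF D] z by simp
  then have "emeasure (distr M lborel X) (space lborel) = 0" by (simp add: emeasure_density)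
  with 1 show False by simp
qed

lemma g_cont: "continuous_on A (gauss_density S)"
  unfolding g_eq[abs_def] gq_def
  using gs_pos by (intro continuous_intros q_cont[OF S]) auto

lemma g_meas[measurable]: "gauss_density S \<in> borel_measurable borel"
  by (rule borel_measurable_continuous_onI[OF g_cont])

lemma g_pos: "0 < gauss_density S x"
  unfolding g_eq using gs_pos by simp

lemma g_int: "integrable lborel (gauss_density S)"
proof -
  have "integrable lborel (\<lambda>x. gauss_density S x * 1) \<longleftrightarrow> integrable M (\<lambda>_. 1::real)"
    by (rule distributed_integrable[OF D]) (auto intro: less_imp_le g_pos)
  moreover have "integrable M (\<lambda>_. 1::real)" using P by (simp add: prob_space_def finite_measure.integrable_const)
  ultimately show ?thesis by simp
qed

lemma gq_scale: "gq (c *\<^sub>R x) = c\<^sup>2 * gq x"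
  unfolding gq_def by (rule q_hom[OF S])

lemma g_scale: "gauss_density S ((1 / sqrt 2) *\<^sub>R x) = exp (- gq x / 4) / gs"
  unfolding g_eq gq_scale by (simp add: power_divide)

lemma g_neg: "gauss_density S (- x) = gauss_density S x"
  using gq_scale[of "-1" x] unfolding g_eq by simp

lemma g_x4_bound: "\<exists>C. \<forall>x. gauss_density S x * (norm x) ^ 4 \<le> C * gauss_density S ((1 / sqrt 2) *\<^sub>R x)"
proof -
  obtain lam where lam: "lam > 0" and ql: "\<And>x. lam * (norm x)\<^sup>2 \<le> gq x"
    using q_lower[OF S] unfolding gq_def by blast
  have "gauss_density S x * (norm x) ^ 4 \<le> 32 / lam\<^sup>2 * gauss_density S ((1 / sqrt 2) *\<^sub>R x)" for x
  proof -
    define t where "t = lam * (norm x)\<^sup>2 / 4"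
    have t0: "0 \<le> t" unfolding t_def using lam by simp
    have n4: "(norm x) ^ 4 = (4 * t / lam)\<^sup>2" unfolding t_def using lam
      by (simp add: power2_eq_square field_simps power4_eq_xxxx)
    have "exp (- gq x / 4) \<le> exp (- t)" unfolding t_def using ql[of x] by simp
    then have "(norm x) ^ 4 * exp (- gq x / 4) \<le> (4 * t / lam)\<^sup>2 * exp (- t)"
      unfolding n4 by (rule mult_left_mono) simp
    also have "\<dots> \<le> 32 / lam\<^sup>2" by (rule exp_bound_aux[OF t0 lam])
    finally have b: "(norm x) ^ 4 * exp (- gq x / 4) \<le> 32 / lam\<^sup>2" .
    have "gauss_density S x * (norm x) ^ 4 = (exp (- gq x / 4) / gs) * ((norm x) ^ 4 * exp (- gq x / 4))"
      unfolding g_eq by (simp add: exp_add[symmetric] field_simps)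
    also have "\<dots> \<le> (exp (- gq x / 4) / gs) * (32 / lam\<^sup>2)"
      using b gs_pos by (intro mult_left_mono) auto
    finally show ?thesis unfolding g_scale by (simp add: mult.commute)
  qed
  then show ?thesis by blast
qed

lemma g_mom_int:
  assumes k: "k \<le> 4"
  shows "integrable lborel (\<lambda>x. gauss_density S x * (w \<bullet> x) ^ k)"
proof -
  obtain C where C: "\<And>x. gauss_density S x * (norm x) ^ 4 \<le> C * gauss_density S ((1 / sqrt 2) *\<^sub>R x)"
    using g_x4_bound by blast
  show ?thesis
  proof (rule Bochner_Integration.integrable_bound)
    show "integrable lborel (\<lambda>x. gauss_density S x + (norm w) ^ 4 * (C * gauss_density S ((1 / sqrt 2) *\<^sub>R x)))"
      using g_int lborel_integrable_scale[OF g_int, of "1 / sqrt 2"] by simp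
    show "(\<lambda>x. gauss_density S x * (w \<bullet> x) ^ k) \<in> borel_measurable lborel" by simp
    show "AE x in lborel. norm (gauss_density S x * (w \<bullet> x) ^ k) \<le>
       norm (gauss_density S x + (norm w) ^ 4 * (C * gauss_density S ((1 / sqrt 2) *\<^sub>R x)))"
    proof (intro AE_I2)
      fix x
      have gp: "0 < gauss_density S x" "0 < gauss_density S ((1 / sqrt 2) *\<^sub>R x)" by (rule g_pos)+
      have "\<bar>w \<bullet> x\<bar> ^ 4 \<le> (norm w * norm x) ^ 4"
        by (intro power_mono Cauchy_Schwarz_ineq2) simp
      then have w4: "(w \<bullet> x) ^ 4 \<le> (norm w) ^ 4 * (norm x) ^ 4"
        using x4_nonneg[of "w \<bullet> x"] by (simp add: power_abs[symmetric] power_mult_distrib)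
      have "norm (gauss_density S x * (w \<bullet> x) ^ k) = gauss_density S x * \<bar>(w \<bullet> x) ^ k\<bar>"
        using gp by (simp add: abs_mult)
      also have "\<dots> \<le> gauss_density S x * (1 + (w \<bullet> x) ^ 4)"
        using gp pow_le_4[OF k] by (intro mult_left_mono) auto
      also have "\<dots> \<le> gauss_density S x * (1 + (norm w) ^ 4 * (norm x) ^ 4)"
        using gp w4 by (intro mult_left_mono) auto
      also have "\<dots> = gauss_density S x + (norm w) ^ 4 * (gauss_density S x * (norm x) ^ 4)"
        by (simp add: algebra_simps)
      also have "\<dots> \<le> gauss_density S x + (norm w) ^ 4 * (C * gauss_density S ((1 / sqrt 2) *\<^sub>R x))"
        using C[of x] by (intro add_left_mono mult_left_mono) auto
      also have "\<dots> \<le> norm (gauss_density S x + (norm w) ^ 4 * (C * gauss_density S ((1 / sqrt 2) *\<^sub>R x)))"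
        by simp
      finally show "norm (gauss_density S x * (w \<bullet> x) ^ k) \<le>
         norm (gauss_density S x + (norm w) ^ 4 * (C * gauss_density S ((1 / sqrt 2) *\<^sub>R x)))" .
    qed
  qed
qed

lemma g_mean0: "(\<integral>x. gauss_density S x * (w \<bullet> x) \<partial>lborel) = 0"
proof -
  have "(\<integral>x. gauss_density S (- x) * (w \<bullet> (- x)) \<partial>lborel) = (\<integral>x. gauss_density S x * (w \<bullet> x) \<partial>lborel)"
    by (rule lborel_integral_neg) simp
  then have "- (\<integral>x. gauss_density S x * (w \<bullet> x) \<partial>lborel) = (\<integral>x. gauss_density S x * (w \<bullet> x) \<partial>lborel)"
    by (simp add: g_neg)
  then show ?thesis by simp
qed

end

context prob_space
begin

context
  fixes Z :: "nat \<Rightarrow> 'a \<Rightarrow> real" and s2 m4 :: real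
  assumes ind: "indep_vars (\<lambda>_. borel) Z UNIV"
    and int4: "\<And>l. integrable M (\<lambda>\<omega>. Z l \<omega> ^ 4)"
    and mean0: "\<And>l. expectation (Z l) = 0"
    and mom2: "\<And>l. expectation (\<lambda>\<omega>. Z l \<omega> ^ 2) \<le> s2"
    and mom4: "\<And>l. expectation (\<lambda>\<omega>. Z l \<omega> ^ 4) \<le> m4"
begin

lemma Zrv[measurable]: "Z l \<in> borel_measurable M"
  using ind unfolding indep_vars_def by auto

lemma Sind: "indep_var borel (Z i) borel (\<lambda>\<omega>. \<Sum>l<i. Z l \<omega>)"
  by (rule indep_vars_sum) (auto intro: indep_vars_subset[OF ind])

lemma Zint: "k \<le> 4 \<Longrightarrow> integrable M (\<lambda>\<omega>. Z l \<omega> ^ k)"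
  by (rule int_pow_le[OF Zrv int4])

lemma s2_nonneg: "0 \<le> s2"
proof -
  have "0 \<le> expectation (\<lambda>\<omega>. Z 0 \<omega> ^ 2)" by (intro integral_nonneg_AE) auto
  then show ?thesis using mom2[of 0] by linarith
qed

lemma S4_int: "integrable M (\<lambda>\<omega>. (\<Sum>l<i. Z l \<omega>) ^ 4)"
proof (induction i)
  case 0
  then show ?case by simp
next
  case (Suc i)
  let ?S = "\<lambda>\<omega>. \<Sum>l<i. Z l \<omega>"
  have Sk: "k \<le> 4 \<Longrightarrow> integrable M (\<lambda>\<omega>. ?S \<omega> ^ k)" for k
    by (rule int_pow_le[OF _ Suc]) auto
  have P: "integrable M (\<lambda>\<omega>. ?S \<omega> ^ a * Z i \<omega> ^ b)" if "a \<le> 4" "b \<le> 4" for a b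
    using indep_pow(1)[OF Sind Zint Sk, of b a] that by (simp add: mult.commute)
  have eq: "(\<Sum>l<Suc i. Z l \<omega>) ^ 4 = ?S \<omega> ^ 4 * Z i \<omega> ^ 0 + 4 * (?S \<omega> ^ 3 * Z i \<omega> ^ 1)
      + 6 * (?S \<omega> ^ 2 * Z i \<omega> ^ 2) + 4 * (?S \<omega> ^ 1 * Z i \<omega> ^ 3) + ?S \<omega> ^ 0 * Z i \<omega> ^ 4" for \<omega>
    by (simp add: algebra_simps power_def numeral_eq_Suc)
  show ?case unfolding eq
    by (intro Bochner_Integration.integrable_add integrable_mult_right P) auto
qed

lemma S_int: "k \<le> 4 \<Longrightarrow> integrable M (\<lambda>\<omega>. (\<Sum>l<i. Z l \<omega>) ^ k)"
  by (rule int_pow_le[OF _ S4_int]) auto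

lemma S_mean: "expectation (\<lambda>\<omega>. \<Sum>l<i. Z l \<omega>) = 0"
proof -
  have "expectation (\<lambda>\<omega>. \<Sum>l<i. Z l \<omega>) = (\<Sum>l<i. expectation (Z l))"
    by (rule Bochner_Integration.integral_sum) (use Zint[of 1] in auto)
  then show ?thesis using mean0 by simp
qed

lemma S2_bound: "expectation (\<lambda>\<omega>. (\<Sum>l<i. Z l \<omega>) ^ 2) \<le> real i * s2"
proof (induction i)
  case 0
  then show ?case by simp
next
  case (Suc i)
  let ?S = "\<lambda>\<omega>. \<Sum>l<i. Z l \<omega>"
  have P: "integrable M (\<lambda>\<omega>. ?S \<omega> ^ a * Z i \<omega> ^ b)"
    "expectation (\<lambda>\<omega>. ?S \<omega> ^ a * Z i \<omega> ^ b) = expectation (\<lambda>\<omega>. ?S \<omega> ^ a) * expectation (\<lambda>\<omega>. Z i \<omega> ^ b)"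
    if "a \<le> 4" "b \<le> 4" for a b
    using indep_pow[OF Sind Zint S_int, of b a] that by (simp_all add: mult.commute)
  have iA: "integrable M (\<lambda>\<omega>. ?S \<omega> ^ 2)" by (rule S_int) simp
  have iB: "integrable M (\<lambda>\<omega>. ?S \<omega> * Z i \<omega>)" using P(1)[of 1 1] by simp
  have iC: "integrable M (\<lambda>\<omega>. Z i \<omega> ^ 2)" by (rule Zint) simp
  have eB: "expectation (\<lambda>\<omega>. ?S \<omega> * Z i \<omega>) = 0" using P(2)[of 1 1] mean0[of i] by simp
  have eq: "(\<Sum>l<Suc i. Z l \<omega>) ^ 2 = ?S \<omega> ^ 2 + 2 * (?S \<omega> * Z i \<omega>) + Z i \<omega> ^ 2" for \<omega>
    by (simp add: algebra_simps power2_eq_square)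
  have "expectation (\<lambda>\<omega>. (\<Sum>l<Suc i. Z l \<omega>) ^ 2) =
      expectation (\<lambda>\<omega>. ?S \<omega> ^ 2) + 2 * expectation (\<lambda>\<omega>. ?S \<omega> * Z i \<omega>)
      + expectation (\<lambda>\<omega>. Z i \<omega> ^ 2)"
    unfolding eq using iA iB iC by simp
  also have "\<dots> = expectation (\<lambda>\<omega>. ?S \<omega> ^ 2) + expectation (\<lambda>\<omega>. Z i \<omega> ^ 2)"
    using eB by simp
  also have "\<dots> \<le> real i * s2 + s2" using Suc mom2[of i] by simp
  finally show ?case by (simp add: algebra_simps)
qed


lemma S4_bound: "expectation (\<lambda>\<omega>. (\<Sum>l<i. Z l \<omega>) ^ 4) \<le> real i * m4 + 3 * (real i)\<^sup>2 * s2\<^sup>2"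
proof (induction i)
  case 0
  then show ?case by simp
next
  case (Suc i)
  let ?S = "\<lambda>\<omega>. \<Sum>l<i. Z l \<omega>"
  have P: "integrable M (\<lambda>\<omega>. ?S \<omega> ^ a * Z i \<omega> ^ b)"
    "expectation (\<lambda>\<omega>. ?S \<omega> ^ a * Z i \<omega> ^ b) = expectation (\<lambda>\<omega>. ?S \<omega> ^ a) * expectation (\<lambda>\<omega>. Z i \<omega> ^ b)"
    if "a \<le> 4" "b \<le> 4" for a b
    using indep_pow[OF Sind Zint S_int, of b a] that by (simp_all add: mult.commute)
  have i1: "integrable M (\<lambda>\<omega>. ?S \<omega> ^ 4)" by (rule S_int) simp
  have i2: "integrable M (\<lambda>\<omega>. ?S \<omega> ^ 3 * Z i \<omega>)" using P(1)[of 3 1] by simp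
  have i3: "integrable M (\<lambda>\<omega>. ?S \<omega> ^ 2 * Z i \<omega> ^ 2)" using P(1)[of 2 2] by simp
  have i4: "integrable M (\<lambda>\<omega>. ?S \<omega> * Z i \<omega> ^ 3)" using P(1)[of 1 3] by simp
  have i5: "integrable M (\<lambda>\<omega>. Z i \<omega> ^ 4)" by (rule Zint) simp
  have e2: "expectation (\<lambda>\<omega>. ?S \<omega> ^ 3 * Z i \<omega>) = 0" using P(2)[of 3 1] mean0[of i] by simp
  have e4: "expectation (\<lambda>\<omega>. ?S \<omega> * Z i \<omega> ^ 3) = 0" using P(2)[of 1 3] S_mean[of i] by simp
  have e3: "expectation (\<lambda>\<omega>. ?S \<omega> ^ 2 * Z i \<omega> ^ 2) \<le> real i * s2 * s2"
  proof -
    have "expectation (\<lambda>\<omega>. ?S \<omega> ^ 2 * Z i \<omega> ^ 2) = expectation (\<lambda>\<omega>. ?S \<omega> ^ 2) * expectation (\<lambda>\<omega>. Z i \<omega> ^ 2)"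
      using P(2)[of 2 2] by simp
    also have "\<dots> \<le> (real i * s2) * s2"
      by (intro mult_mono S2_bound mom2 integral_nonneg_AE) (auto simp: s2_nonneg)
    finally show ?thesis .
  qed
  have eq: "(\<Sum>l<Suc i. Z l \<omega>) ^ 4 = ?S \<omega> ^ 4 + 4 * (?S \<omega> ^ 3 * Z i \<omega>) + 6 * (?S \<omega> ^ 2 * Z i \<omega> ^ 2)
      + 4 * (?S \<omega> * Z i \<omega> ^ 3) + Z i \<omega> ^ 4" for \<omega>
    by (simp add: algebra_simps power_def numeral_eq_Suc)
  have "expectation (\<lambda>\<omega>. (\<Sum>l<Suc i. Z l \<omega>) ^ 4) =
      expectation (\<lambda>\<omega>. ?S \<omega> ^ 4) + 4 * expectation (\<lambda>\<omega>. ?S \<omega> ^ 3 * Z i \<omega>)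
      + 6 * expectation (\<lambda>\<omega>. ?S \<omega> ^ 2 * Z i \<omega> ^ 2)
      + 4 * expectation (\<lambda>\<omega>. ?S \<omega> * Z i \<omega> ^ 3) + expectation (\<lambda>\<omega>. Z i \<omega> ^ 4)"
    unfolding eq using i1 i2 i3 i4 i5 by simp
  also have "\<dots> \<le> (real i * m4 + 3 * (real i)\<^sup>2 * s2\<^sup>2) + 6 * (real i * s2 * s2) + m4"
    using e2 e3 e4 Suc mom4[of i] by simp
  also have "\<dots> \<le> real (Suc i) * m4 + 3 * (real (Suc i))\<^sup>2 * s2\<^sup>2"
    by (simp add: algebra_simps power2_eq_square)
  finally show ?case .
qed

lemma S_prob_bound:
  assumes t: "t > 0"
  shows "prob {\<omega> \<in> space M. t \<le> \<bar>\<Sum>l<i. Z l \<omega>\<bar>} \<le> real i * s2 / t\<^sup>2"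
proof -
  have "{\<omega> \<in> space M. t \<le> \<bar>\<Sum>l<i. Z l \<omega>\<bar>} = {\<omega> \<in> space M. t\<^sup>2 \<le> (\<Sum>l<i. Z l \<omega>)\<^sup>2}"
    using t by (auto simp: abs_le_square_iff[symmetric] abs_of_pos)
  also have "prob \<dots> \<le> expectation (\<lambda>\<omega>. (\<Sum>l<i. Z l \<omega>)\<^sup>2) / t\<^sup>2"
    by (rule integral_Markov_inequality_measure[where A="space M"]) (use S_int[of 2] t in auto)
  also have "\<dots> \<le> real i * s2 / t\<^sup>2"
    using S2_bound t by (simp add: divide_right_mono)
  finally show ?thesis .
qed

lemma S_prob_bound4:
  assumes t: "t > 0"
  shows "prob {\<omega> \<in> space M. t \<le> \<bar>\<Sum>l<i. Z l \<omega>\<bar>} \<le> (real i * m4 + 3 * (real i)\<^sup>2 * s2\<^sup>2) / t ^ 4"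
proof -
  have "{\<omega> \<in> space M. t \<le> \<bar>\<Sum>l<i. Z l \<omega>\<bar>} = {\<omega> \<in> space M. t ^ 4 \<le> (\<Sum>l<i. Z l \<omega>) ^ 4}"
  proof -
    have "t \<le> \<bar>x\<bar> \<longleftrightarrow> t ^ 4 \<le> x ^ 4" for x :: real
    proof -
      have a: "x ^ 4 = \<bar>x\<bar> ^ 4" using x4_nonneg[of x] by (simp add: power_abs[symmetric])
      have "t \<le> \<bar>x\<bar> \<longleftrightarrow> t ^ 4 \<le> \<bar>x\<bar> ^ 4" using t by (intro power_mono_iff[symmetric]) auto
      then show ?thesis unfolding a .
    qed
    then show ?thesis by auto
  qed
  also have "prob \<dots> \<le> expectation (\<lambda>\<omega>. (\<Sum>l<i. Z l \<omega>) ^ 4) / t ^ 4"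
    by (rule integral_Markov_inequality_measure[where A="space M"]) (use S4_int t x4_nonneg in auto)
  also have "\<dots> \<le> (real i * m4 + 3 * (real i)\<^sup>2 * s2\<^sup>2) / t ^ 4"
    using S4_bound t by (simp add: divide_right_mono)
  finally show ?thesis .
qed

lemma m4_nonneg: "0 \<le> m4"
proof -
  have "0 \<le> expectation (\<lambda>\<omega>. Z 0 \<omega> ^ 4)" by (intro integral_nonneg_AE) (auto simp: x4_nonneg)
  then show ?thesis using mom4[of 0] by linarith
qed

lemma S_AE_event:
  assumes e: "e > 0"
  shows "AE \<omega> in M. eventually (\<lambda>i. \<bar>\<Sum>l<i. Z l \<omega>\<bar> < e * real i) sequentially"
proof -
  define A where "A i = {\<omega> \<in> space M. e * real i \<le> \<bar>\<Sum>l<i. Z l \<omega>\<bar>}" for i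
  have Am: "A i \<in> sets M" for i unfolding A_def by measurable
  define C where "C = (m4 + 3 * s2\<^sup>2) / e ^ 4"
  have bound: "norm (measure M (A i)) \<le> C * inverse (real i ^ 2)" if i: "i \<ge> 1" for i
  proof -
    have ip: "real i > 0" using i by simp
    have "measure M (A i) \<le> (real i * m4 + 3 * (real i)\<^sup>2 * s2\<^sup>2) / (e * real i) ^ 4"
      unfolding A_def by (rule S_prob_bound4) (use e ip in simp)
    also have "\<dots> \<le> ((real i)\<^sup>2 * m4 + 3 * (real i)\<^sup>2 * s2\<^sup>2) / (e * real i) ^ 4"
    proof (rule divide_right_mono)
      have "real i \<le> (real i)\<^sup>2" using i by (simp add: power2_eq_square)
      then have "real i * m4 \<le> (real i)\<^sup>2 * m4" using m4_nonneg by (rule mult_right_mono)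
      then show "real i * m4 + 3 * (real i)\<^sup>2 * s2\<^sup>2 \<le> (real i)\<^sup>2 * m4 + 3 * (real i)\<^sup>2 * s2\<^sup>2" by simp
    qed simp
    also have "\<dots> = C * inverse (real i ^ 2)"
      unfolding C_def using e ip by (simp add: field_simps power2_eq_square power4_eq_xxxx)
    finally show ?thesis by simp
  qed
  have "summable (\<lambda>i. C * inverse (real i ^ 2))"
    by (intro summable_mult inverse_power_summable) simp
  then have "summable (\<lambda>i. measure M (A i))"
    by (rule summable_comparison_test'[where N=1]) (use bound in auto)
  then have "AE \<omega> in M. eventually (\<lambda>i. \<omega> \<in> space M - A i) sequentially"
    by (intro borel_cantelli_AE1 Am) (auto simp: emeasure_eq_measure)
  then show ?thesis
    by (rule AE_mp) (auto simp: A_def elim!: eventually_mono)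
qed

lemma S_AE_lim: "AE \<omega> in M. (\<lambda>i. (\<Sum>l<i. Z l \<omega>) / real i) \<longlonglongrightarrow> 0"
proof -
  have "AE \<omega> in M. \<forall>m::nat. eventually (\<lambda>i. \<bar>\<Sum>l<i. Z l \<omega>\<bar> < inverse (real (Suc m)) * real i) sequentially"
    unfolding AE_all_countable by (intro allI S_AE_event) simp
  then show ?thesis
  proof (rule AE_mp, intro AE_I2 impI)
    fix \<omega> assume H: "\<forall>m::nat. eventually (\<lambda>i. \<bar>\<Sum>l<i. Z l \<omega>\<bar> < inverse (real (Suc m)) * real i) sequentially"
    show "(\<lambda>i. (\<Sum>l<i. Z l \<omega>) / real i) \<longlonglongrightarrow> 0"
    proof (rule LIMSEQ_I)
      fix r :: real assume r: "0 < r"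
      obtain m where m: "inverse (real (Suc m)) < r" using reals_Archimedean[OF r] by blast
      obtain N where N: "\<And>i. i \<ge> N \<Longrightarrow> \<bar>\<Sum>l<i. Z l \<omega>\<bar> < inverse (real (Suc m)) * real i"
        using H[rule_format, of m] unfolding eventually_sequentially by blast
      show "\<exists>no. \<forall>n\<ge>no. norm ((\<Sum>l<n. Z l \<omega>) / real n - 0) < r"
      proof (intro exI allI impI)
        fix n assume n: "max N 1 \<le> n"
        then have np: "real n > 0" by simp
        have "\<bar>\<Sum>l<n. Z l \<omega>\<bar> < inverse (real (Suc m)) * real n" using N n by simp
        then have "\<bar>\<Sum>l<n. Z l \<omega>\<bar> / real n < inverse (real (Suc m))" using np by (simp add: divide_less_eq)
        then show "norm ((\<Sum>l<n. Z l \<omega>) / real n - 0) < r" using m np by simp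
      qed
    qed
  qed
qed

end
end

lemma powr_facts:
  fixes x p :: real assumes x: "x > 0"
  shows "x powr p = x * x powr (p - 1)"
    and "(x powr q)\<^sup>2 = x powr (2 * q)"
    and "x / x powr (2 - 2 * p) = x powr (2 * p - 1)"
proof -
  have "x powr p = x powr (1 + (p - 1))" by simp
  also have "\<dots> = x powr 1 * x powr (p - 1)" by (rule powr_add)
  also have "\<dots> = x * x powr (p - 1)" using x by simp
  finally show "x powr p = x * x powr (p - 1)" .
  show "(x powr q)\<^sup>2 = x powr (2 * q)"
    by (simp add: power2_eq_square powr_add[symmetric])
  have "x powr (2 * p - 1) = x powr (1 - (2 - 2 * p))" by (simp add: algebra_simps)
  also have "\<dots> = x powr 1 / x powr (2 - 2 * p)" by (rule powr_diff)
  also have "\<dots> = x / x powr (2 - 2 * p)" using x by simp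
  finally show "x / x powr (2 - 2 * p) = x powr (2 * p - 1)" by simp
qed

lemma frac_aux: fixes d x s :: real assumes "x > 0" "d > 0" "s \<ge> 0"
  shows "d * s / (1 + x * d) \<le> s / x"
proof -
  have pd: "0 < 1 + x * d" using assms by (simp add: add_pos_pos)
  have "d * s * x \<le> s * (1 + x * d)" using assms by (simp add: algebra_simps)
  then have "d * s \<le> s * (1 + x * d) / x" using assms by (simp add: le_divide_eq)
  then have "d * s / (1 + x * d) \<le> s * (1 + x * d) / x / (1 + x * d)" using pd by (rule divide_right_mono[OF _ less_imp_le])
  also have "\<dots> = s / x" using pd by simp
  finally show ?thesis .
qed

context prob_space
begin

context
  fixes Z :: "nat \<Rightarrow> 'a \<Rightarrow> real" and s2 m4 :: real
  assumes ind: "indep_vars (\<lambda>_. borel) Z UNIV"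
    and int4: "\<And>l. integrable M (\<lambda>\<omega>. Z l \<omega> ^ 4)"
    and mean0: "\<And>l. expectation (Z l) = 0"
    and mom2: "\<And>l. expectation (\<lambda>\<omega>. Z l \<omega> ^ 2) \<le> s2"
    and mom4: "\<And>l. expectation (\<lambda>\<omega>. Z l \<omega> ^ 4) \<le> m4"
begin

lemma alpha_prob:
  fixes a d c p :: real
  assumes d: "d > 0" and c: "c > 0" and p0: "0 < p" and p1: "p < 1/2"
  shows "(\<lambda>i. prob {\<omega> \<in> space M. c / real i powr p \<le> \<bar>(a + d * (\<Sum>l<i. Z l \<omega>)) / (1 + real i * d)\<bar>}) \<longlonglongrightarrow> 0"
proof (rule tendsto_sandwich)
  let ?S = "\<lambda>i \<omega>. \<Sum>l<i. Z l \<omega>"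
  let ?B = "\<lambda>i. 4 * s2 / c\<^sup>2 * real i powr (2 * p - 1)"
  show "eventually (\<lambda>i. 0 \<le> prob {\<omega> \<in> space M. c / real i powr p \<le> \<bar>(a + d * ?S i \<omega>) / (1 + real i * d)\<bar>}) sequentially"
    by simp
  have lim1: "(\<lambda>i. real i powr (p - 1)) \<longlonglongrightarrow> 0"
    using p1 by (intro tendsto_neg_powr filterlim_real_sequentially) simp
  have ev1: "eventually (\<lambda>i. real i powr (p - 1) < c * d / (2 * (\<bar>a\<bar> + 1))) sequentially"
    by (rule order_tendstoD(2)[OF lim1]) (use c d in simp)
  have ev: "eventually (\<lambda>i. i \<ge> 1 \<and> real i powr (p - 1) < c * d / (2 * (\<bar>a\<bar> + 1))) sequentially"
    using ev1 eventually_ge_at_top[of "1::nat"] by eventually_elim auto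
  show "eventually (\<lambda>i. prob {\<omega> \<in> space M. c / real i powr p \<le> \<bar>(a + d * ?S i \<omega>) / (1 + real i * d)\<bar>} \<le> ?B i) sequentially"
    using ev
  proof eventually_elim
    case (elim i)
    define x where "x = real i"
    have x: "x > 0" "x \<ge> 1" using elim unfolding x_def by auto
    have xp: "x powr p > 0" using x by simp
    have small: "\<bar>a\<bar> / (1 + x * d) \<le> c / (2 * x powr p)"
    proof -
      have "2 * (\<bar>a\<bar> + 1) * x powr (p - 1) \<le> c * d"
        using elim unfolding x_def[symmetric] by (simp add: field_simps)
      then have "2 * \<bar>a\<bar> * x powr (p - 1) \<le> c * d"
        by (smt (verit, best) mult_right_mono powr_ge_zero)
      then have "2 * \<bar>a\<bar> * x powr p \<le> c * d * x"
        using powr_facts(1)[OF x(1), of p] x by (smt (verit) mult.assoc mult.commute mult_right_mono)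
      also have "\<dots> \<le> c * (1 + x * d)" using c by (simp add: algebra_simps)
      finally have "2 * \<bar>a\<bar> * x powr p \<le> c * (1 + x * d)" .
      then show ?thesis using xp x d by (simp add: field_simps add_pos_pos)
    qed
    have sub: "{\<omega> \<in> space M. c / x powr p \<le> \<bar>(a + d * ?S i \<omega>) / (1 + x * d)\<bar>} \<subseteq>
        {\<omega> \<in> space M. c / 2 * x powr (1 - p) \<le> \<bar>?S i \<omega>\<bar>}"
    proof safe
      fix \<omega> assume \<omega>: "\<omega> \<in> space M" and le: "c / x powr p \<le> \<bar>(a + d * ?S i \<omega>) / (1 + x * d)\<bar>"
      have pd: "1 + x * d > 0" using x d by (simp add: add_pos_pos)
      have t: "\<bar>a + d * ?S i \<omega>\<bar> \<le> \<bar>a\<bar> + d * \<bar>?S i \<omega>\<bar>"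
        using abs_triangle_ineq[of a "d * ?S i \<omega>"] d by (simp add: abs_mult)
      have "\<bar>(a + d * ?S i \<omega>) / (1 + x * d)\<bar> = \<bar>a + d * ?S i \<omega>\<bar> / (1 + x * d)"
        using pd by simp
      also have "\<dots> \<le> (\<bar>a\<bar> + d * \<bar>?S i \<omega>\<bar>) / (1 + x * d)"
        using t pd by (simp add: divide_right_mono)
      also have "\<dots> = \<bar>a\<bar> / (1 + x * d) + d * \<bar>?S i \<omega>\<bar> / (1 + x * d)"
        by (simp add: add_divide_distrib)
      finally have "\<bar>(a + d * ?S i \<omega>) / (1 + x * d)\<bar> \<le> \<bar>a\<bar> / (1 + x * d) + d * \<bar>?S i \<omega>\<bar> / (1 + x * d)" .
      also have "d * \<bar>?S i \<omega>\<bar> / (1 + x * d) \<le> \<bar>?S i \<omega>\<bar> / x"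
        by (rule frac_aux) (use x d in auto)
      finally have "c / x powr p \<le> c / (2 * x powr p) + \<bar>?S i \<omega>\<bar> / x" using le small by linarith
      then have "c / (2 * x powr p) \<le> \<bar>?S i \<omega>\<bar> / x" by (simp add: field_simps)
      then have "c * x / (2 * x powr p) \<le> \<bar>?S i \<omega>\<bar>" using x xp by (simp add: field_simps)
      moreover have "c * x / (2 * x powr p) = c / 2 * x powr (1 - p)"
        using x by (simp add: powr_diff)
      ultimately show "c / 2 * x powr (1 - p) \<le> \<bar>?S i \<omega>\<bar>" by simp
    qed
    have tpos: "c / 2 * x powr (1 - p) > 0" using c x by simp
    have "prob {\<omega> \<in> space M. c / x powr p \<le> \<bar>(a + d * ?S i \<omega>) / (1 + x * d)\<bar>}
        \<le> prob {\<omega> \<in> space M. c / 2 * x powr (1 - p) \<le> \<bar>?S i \<omega>\<bar>}"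
    proof (rule finite_measure_mono[OF sub])
      have [measurable]: "Z l \<in> borel_measurable M" for l by (rule Zrv[OF ind int4 mean0 mom2 mom4])
      show "{\<omega> \<in> space M. c / 2 * x powr (1 - p) \<le> \<bar>\<Sum>l<i. Z l \<omega>\<bar>} \<in> sets M" by measurable
    qed
    also have "\<dots> \<le> real i * s2 / (c / 2 * x powr (1 - p))\<^sup>2"
      by (rule S_prob_bound[OF ind int4 mean0 mom2 mom4 tpos])
    also have "\<dots> = 4 * s2 / c\<^sup>2 * (x / x powr (2 - 2 * p))"
    proof -
      have e1: "(c / 2 * x powr (1 - p))\<^sup>2 = c\<^sup>2 / 4 * x powr (2 - 2 * p)"
        unfolding power_mult_distrib powr_facts(2)[OF x(1)] by (simp add: algebra_simps power_divide)
      have X: "x powr (2 - 2 * p) > 0" using x by simp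
      show ?thesis unfolding e1 x_def[symmetric] using c X by (simp add: field_simps)
    qed
    also have "\<dots> = ?B i" using powr_facts(3)[OF x(1), of p] unfolding x_def by simp
    finally show ?case by (simp add: x_def)
  qed
  have "(\<lambda>i. real i powr (2 * p - 1)) \<longlonglongrightarrow> 0"
    using p1 by (intro tendsto_neg_powr filterlim_real_sequentially) simp
  then show "?B \<longlonglongrightarrow> 0" by (intro tendsto_mult_right_zero)
  show "(\<lambda>i. 0) \<longlonglongrightarrow> (0::real)" by simp
qed

lemma alpha_AE:
  fixes a d :: real
  assumes d: "d > 0"
  shows "AE \<omega> in M. (\<lambda>i. (a + d * (\<Sum>l<i. Z l \<omega>)) / (1 + real i * d)) \<longlonglongrightarrow> 0"
  using S_AE_lim[OF ind int4 mean0 mom2 mom4]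
proof (rule AE_mp, intro AE_I2 impI)
  fix \<omega> assume L: "(\<lambda>i. (\<Sum>l<i. Z l \<omega>) / real i) \<longlonglongrightarrow> 0"
  let ?S = "\<lambda>i. \<Sum>l<i. Z l \<omega>"
  have inv0: "(\<lambda>i. inverse (real i)) \<longlonglongrightarrow> 0"
    by (rule tendsto_inverse_0_at_top[OF filterlim_real_sequentially])
  have g0: "(\<lambda>i. \<bar>a\<bar> / d * inverse (real i) + norm (?S i / real i)) \<longlonglongrightarrow> 0"
    using tendsto_mult_right_zero[OF inv0, of "\<bar>a\<bar> / d"] tendsto_norm_zero[OF L]
    by (intro tendsto_add_zero) auto
  show "(\<lambda>i. (a + d * ?S i) / (1 + real i * d)) \<longlonglongrightarrow> 0"
  proof (rule Lim_null_comparison[OF _ g0])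
    show "eventually (\<lambda>i. norm ((a + d * ?S i) / (1 + real i * d)) \<le> \<bar>a\<bar> / d * inverse (real i) + norm (?S i / real i)) sequentially"
      using eventually_ge_at_top[of "1::nat"]
    proof eventually_elim
      case (elim i)
      define x where "x = real i"
      have x: "x > 0" using elim unfolding x_def by simp
      have pd: "1 + x * d > 0" using x d by (simp add: add_pos_pos)
      have t: "\<bar>a + d * ?S i\<bar> \<le> \<bar>a\<bar> + d * \<bar>?S i\<bar>"
        using abs_triangle_ineq[of a "d * ?S i"] d by (simp add: abs_mult)
      have "norm ((a + d * ?S i) / (1 + x * d)) = \<bar>a + d * ?S i\<bar> / (1 + x * d)"
        using pd by simp
      also have "\<dots> \<le> (\<bar>a\<bar> + d * \<bar>?S i\<bar>) / (1 + x * d)"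
        using t pd by (simp add: divide_right_mono)
      also have "\<dots> = \<bar>a\<bar> / (1 + x * d) + d * \<bar>?S i\<bar> / (1 + x * d)"
        by (simp add: add_divide_distrib)
      also have "d * \<bar>?S i\<bar> / (1 + x * d) \<le> \<bar>?S i\<bar> / x"
        by (rule frac_aux) (use x d in auto)
      also have "\<bar>a\<bar> / (1 + x * d) \<le> \<bar>a\<bar> / (x * d)"
        using x d pd by (intro divide_left_mono) auto
      also have "\<bar>a\<bar> / (x * d) = \<bar>a\<bar> / d * inverse x" by (simp add: field_simps)
      finally show ?case unfolding x_def by simp
    qed
  qed
qed

end
end

lemma (in prob_space) indep_sets_reindex:
  assumes ind: "indep_sets F (f ` I)" and inj: "inj_on f I"
  shows "indep_sets (\<lambda>i. F (f i)) I"
  unfolding indep_sets_def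
proof (intro conjI ballI allI impI)
  fix i assume "i \<in> I"
  then show "F (f i) \<subseteq> events" using ind unfolding indep_sets_def by blast
next
  fix J A assume J: "J \<subseteq> I" "J \<noteq> {}" "finite J" and A: "A \<in> Pi J (\<lambda>i. F (f i))"
  define B where "B x = A (the_inv_into J f x)" for x
  have injJ: "inj_on f J" using inj J(1) by (rule inj_on_subset)
  have B: "B (f j) = A j" if "j \<in> J" for j
    unfolding B_def using the_inv_into_f_f[OF injJ that] by simp
  have "B \<in> Pi (f ` J) F" using A B by auto
  moreover have "f ` J \<subseteq> f ` I" "f ` J \<noteq> {}" "finite (f ` J)" using J by auto
  ultimately have "prob (\<Inter>x\<in>f ` J. B x) = (\<Prod>x\<in>f ` J. prob (B x))"
    using ind unfolding indep_sets_def by blast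
  moreover have "(\<Inter>x\<in>f ` J. B x) = (\<Inter>j\<in>J. A j)" using B by auto
  moreover have "(\<Prod>x\<in>f ` J. prob (B x)) = (\<Prod>j\<in>J. prob (A j))"
    using prod.reindex[OF injJ, of "\<lambda>x. prob (B x)"] B by simp
  ultimately show "prob (\<Inter>j\<in>J. A j) = (\<Prod>j\<in>J. prob (A j))" by simp
qed

lemma (in prob_space) indep_vars_reindex:
  assumes ind: "indep_vars M' X (f ` I)" and inj: "inj_on f I"
  shows "indep_vars (\<lambda>i. M' (f i)) (\<lambda>i. X (f i)) I"
  using ind unfolding indep_vars_def
  by (auto intro: indep_sets_reindex[OF _ inj, of "\<lambda>i. sigma_sets (space M) {X i -` A \<inter> space M |A. A \<in> sets (M' i)}"])

lemma scaleR_mat_vec: "(c *\<^sub>R (A::real^'m^'n)) *v z = c *\<^sub>R (A *v z)"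
  by (simp add: matrix_vector_mult_def vec_eq_iff sum_distrib_left mult_ac)

lemma ens_cov_psd:
  fixes v :: "nat \<Rightarrow> real^'d"
  assumes J: "J \<ge> 2"
  shows "0 \<le> z \<bullet> (ens_cov J v *v z)"
proof -
  let ?u = "\<lambda>j. v j - ens_mean J v"
  have "ens_cov J v *v z = (1 / (real J - 1)) *\<^sub>R (\<Sum>j=1..J. outer (?u j) (?u j) *v z)"
    unfolding ens_cov_def by (simp add: scaleR_mat_vec sum_mat_vec)
  also have "\<dots> = (1 / (real J - 1)) *\<^sub>R (\<Sum>j=1..J. (?u j \<bullet> z) *\<^sub>R ?u j)"
    by (simp add: outer_mult)
  finally have "z \<bullet> (ens_cov J v *v z) = (1 / (real J - 1)) * (\<Sum>j=1..J. (?u j \<bullet> z) * (z \<bullet> ?u j))"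
    by (simp add: inner_sum_right)
  also have "\<dots> = (1 / (real J - 1)) * (\<Sum>j=1..J. (?u j \<bullet> z)\<^sup>2)"
    by (simp add: power2_eq_square inner_commute)
  also have "\<dots> \<ge> 0" using J by (intro mult_nonneg_nonneg sum_nonneg) auto
  finally show ?thesis .
qed

lemma Zgood:
  fixes S :: "real^'n^'n" and M :: "'a measure" and eps :: "nat \<Rightarrow> nat \<Rightarrow> 'a \<Rightarrow> real^'n"
  assumes S: "spd S" and P: "prob_space M"
    and gauss: "\<And>i. distributed M lborel (eps i j) (\<lambda>x. ennreal (gauss_density S x))"
    and indep: "prob_space.indep_vars M (\<lambda>_. borel) (\<lambda>(i, j). eps i j) (UNIV \<times> {1..J})"
    and j: "j \<in> {1..J}"
  shows "prob_space.indep_vars M (\<lambda>_. borel) (\<lambda>l \<omega>. u \<bullet> eps l j \<omega>) UNIV"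
    and "integrable M (\<lambda>\<omega>. (u \<bullet> eps l j \<omega>) ^ 4)"
    and "integral\<^sup>L M (\<lambda>\<omega>. u \<bullet> eps l j \<omega>) = 0"
    and "integral\<^sup>L M (\<lambda>\<omega>. (u \<bullet> eps l j \<omega>) ^ 2) = (\<integral>x. gauss_density S x * (u \<bullet> x) ^ 2 \<partial>lborel)"
    and "integral\<^sup>L M (\<lambda>\<omega>. (u \<bullet> eps l j \<omega>) ^ 4) = (\<integral>x. gauss_density S x * (u \<bullet> x) ^ 4 \<partial>lborel)"
proof -
  interpret P: prob_space M by (rule P)
  have gnn: "\<And>x. x \<in> space lborel \<Longrightarrow> 0 \<le> gauss_density S x"
    using g_pos[OF S P gauss] less_imp_le by blast
  have "P.indep_vars (\<lambda>_. borel) (\<lambda>(i, j). eps i j) ((\<lambda>l. (l, j)) ` UNIV)"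
    by (rule P.indep_vars_subset[OF indep]) (use j in auto)
  then have "P.indep_vars (\<lambda>_. borel) (\<lambda>l. (\<lambda>(i, j). eps i j) (l, j)) UNIV"
    by (rule P.indep_vars_reindex) (simp add: inj_on_def)
  then have "P.indep_vars (\<lambda>_. borel) (\<lambda>l. eps l j) UNIV" by simp
  then have "P.indep_vars (\<lambda>_. borel) (\<lambda>l \<omega>. (\<lambda>x. u \<bullet> x) (eps l j \<omega>)) UNIV"
    by (rule P.indep_vars_compose2) simp
  then show "P.indep_vars (\<lambda>_. borel) (\<lambda>l \<omega>. u \<bullet> eps l j \<omega>) UNIV" by simp
  have "integrable lborel (\<lambda>x. gauss_density S x * (u \<bullet> x) ^ 4) \<longleftrightarrow> integrable M (\<lambda>\<omega>. (u \<bullet> eps l j \<omega>) ^ 4)"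
    by (rule distributed_integrable[OF gauss _ gnn]) simp
  then show "integrable M (\<lambda>\<omega>. (u \<bullet> eps l j \<omega>) ^ 4)"
    using g_mom_int[OF S P gauss, of 4 u] by simp
  have "(\<integral>x. gauss_density S x * (u \<bullet> x) \<partial>lborel) = integral\<^sup>L M (\<lambda>\<omega>. u \<bullet> eps l j \<omega>)"
    by (rule distributed_integral[OF gauss _ gnn]) simp
  then show "integral\<^sup>L M (\<lambda>\<omega>. u \<bullet> eps l j \<omega>) = 0"
    using g_mean0[OF S P gauss, of u] by simp
  show "integral\<^sup>L M (\<lambda>\<omega>. (u \<bullet> eps l j \<omega>) ^ 2) = (\<integral>x. gauss_density S x * (u \<bullet> x) ^ 2 \<partial>lborel)"
    by (rule distributed_integral[OF gauss _ gnn, symmetric]) simp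
  show "integral\<^sup>L M (\<lambda>\<omega>. (u \<bullet> eps l j \<omega>) ^ 4) = (\<integral>x. gauss_density S x * (u \<bullet> x) ^ 4 \<partial>lborel)"
    by (rule distributed_integral[OF gauss _ gnn, symmetric]) simp
qed

lemma mat_vec_sum: "finite F \<Longrightarrow> (A::real^'m^'n) *v (\<Sum>k\<in>F. f k) = (\<Sum>k\<in>F. A *v f k)"
  by (induction F rule: finite_induct) (auto simp: matrix_vector_right_distrib)

theorem propositionA2:
  fixes H :: "real^'d^'n" and \<Sigma> :: "real^'n^'n" and y :: "real^'n"
    and J :: nat and v0 :: "nat \<Rightarrow> real^'d"
    and M :: "'a measure" and \<epsilon> :: "nat \<Rightarrow> nat \<Rightarrow> 'a \<Rightarrow> real^'n"
    and h r :: nat and w :: "nat \<Rightarrow> real^'n"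
  assumes \<Sigma>_spd: "spd \<Sigma>"
    and J2: "J \<ge> 2"
    and h_def: "h = rank H"
    and M_prob: "prob_space M"
    and eps_gauss: "\<And>i j. j \<in> {1..J} \<Longrightarrow>
        distributed M lborel (\<epsilon> i j) (\<lambda>x. ennreal (gauss_density \<Sigma> x))"
    and eps_indep: "prob_space.indep_vars M (\<lambda>_. borel) (\<lambda>(i, j). \<epsilon> i j) (UNIV \<times> {1..J})"
    and r_le_h: "r \<le> h"
    and w_orth: "\<And>k l. k \<in> {1..CARD('n)} \<Longrightarrow> l \<in> {1..CARD('n)} \<Longrightarrow>
        w k \<bullet> (\<Sigma> *v w l) = (if k = l then 1 else 0)"
    and w_basis: "span (w ` {1..CARD('n)}) = UNIV"
    and w_eig: "\<And>k i. k \<in> {1..CARD('n)} \<Longrightarrow>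
        \<exists>\<delta>. Cseq H \<Sigma> (ens_cov J v0) i *v w k = \<delta> *\<^sub>R (\<Sigma> *v w k)"
    and w_pos: "\<And>k. k \<in> {1..r} \<Longrightarrow>
        w k \<in> range (\<lambda>x. (matrix_inv \<Sigma> ** H) *v x) \<and>
        (\<exists>\<delta>>0. Cseq H \<Sigma> (ens_cov J v0) 0 *v w k = \<delta> *\<^sub>R (\<Sigma> *v w k))"
    and w_zero: "\<And>k. k \<in> {r<..h} \<Longrightarrow>
        w k \<in> range (\<lambda>x. (matrix_inv \<Sigma> ** H) *v x) \<and>
        Cseq H \<Sigma> (ens_cov J v0) 0 *v w k = 0"
    and w_ker: "\<And>k. k \<in> {h<..CARD('n)} \<Longrightarrow> transpose H *v w k = 0"
  shows "\<forall>j\<in>{1..J}.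
     (\<forall>p \<epsilon>'. 0 < p \<and> p < 1/2 \<and> \<epsilon>' > 0 \<longrightarrow>
        (\<lambda>i. measure M {\<omega> \<in> space M.
            norm ((\<Sigma> ** (\<Sum>k=1..r. outer (w k) (w k))) *v theta H \<Sigma> y J v0 \<epsilon> i j \<omega>)
              \<ge> \<epsilon>' / real i powr p}) \<longlonglongrightarrow> 0)
     \<and> (AE \<omega> in M. (\<lambda>i. (\<Sigma> ** (\<Sum>k=1..r. outer (w k) (w k))) *v theta H \<Sigma> y J v0 \<epsilon> i j \<omega>)
            \<longlonglongrightarrow> 0)"
proof -
  interpret P: prob_space M by (rule M_prob)
  have Gpsd: "\<And>z. 0 \<le> z \<bullet> (ens_cov J v0 *v z)" using ens_cov_psd[OF J2] .
  have rK: "\<And>k. k \<in> {1..r} \<Longrightarrow> k \<in> {1..CARD('n)}"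
    using r_le_h h_def rank_bound[of H] by auto
  define dk where "dk k = w k \<bullet> (Cseq H \<Sigma> (ens_cov J v0) 0 *v w k)" for k
  have dpos: "0 < dk k" if k: "k \<in> {1..r}" for k
  proof -
    obtain \<delta> where d: "\<delta> > 0" "Cseq H \<Sigma> (ens_cov J v0) 0 *v w k = \<delta> *\<^sub>R (\<Sigma> *v w k)"
      using w_pos[OF k] by blast
    have "dk k = \<delta>" unfolding dk_def d(2) using w_orth[OF rK[OF k] rK[OF k]] by simp
    then show ?thesis using d(1) by simp
  qed
  have alpha: "w k \<bullet> theta H \<Sigma> y J v0 \<epsilon> i j \<omega> =
     (w k \<bullet> (H *v v0 j - y) + dk k * (\<Sum>l<i. w k \<bullet> \<epsilon> l j \<omega>)) / (1 + real i * dk k)"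
    if k: "k \<in> {1..r}" for k i j \<omega>
    unfolding dk_def
    by (rule alpha_formula[OF \<Sigma>_spd Gpsd w_orth w_basis w_eig rK[OF k] dpos[OF k, unfolded dk_def]])
  have proj: "(\<Sigma> ** (\<Sum>k=1..r. outer (w k) (w k))) *v x = (\<Sum>k=1..r. (w k \<bullet> x) *\<^sub>R (\<Sigma> *v w k))" for x
    by (simp add: matrix_vector_mul_assoc[symmetric] sum_mat_vec outer_mult mat_vec_sum matrix_vector_mult_scaleR)
  show ?thesis
  proof (intro ballI conjI allI impI)
    fix j assume j: "j \<in> {1..J}"
    define Z where "Z k l \<omega> = w k \<bullet> \<epsilon> l j \<omega>" for k l \<omega>
    define s2 where "s2 k = (\<integral>x. gauss_density \<Sigma> x * (w k \<bullet> x) ^ 2 \<partial>lborel)" for k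
    define m4 where "m4 k = (\<integral>x. gauss_density \<Sigma> x * (w k \<bullet> x) ^ 4 \<partial>lborel)" for k
    define a where "a k = w k \<bullet> (H *v v0 j - y)" for k
    note ZG = Zgood[OF \<Sigma>_spd M_prob eps_gauss[OF j] eps_indep j]
    have ind: "P.indep_vars (\<lambda>_. borel) (Z k) UNIV" for k
      unfolding Z_def by (rule ZG(1))
    have int4: "integrable M (\<lambda>\<omega>. Z k l \<omega> ^ 4)" for k l
      unfolding Z_def by (rule ZG(2))
    have mean0: "P.expectation (Z k l) = 0" for k l
      unfolding Z_def by (rule ZG(3))
    have mom2: "P.expectation (\<lambda>\<omega>. Z k l \<omega> ^ 2) \<le> s2 k" for k l
      unfolding Z_def s2_def using ZG(4) by simp
    have mom4: "P.expectation (\<lambda>\<omega>. Z k l \<omega> ^ 4) \<le> m4 k" for k l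
      unfolding Z_def m4_def using ZG(5) by simp
    have Zm[measurable]: "Z k l \<in> borel_measurable M" for k l
      by (rule P.Zrv[OF ind int4 mean0 mom2 mom4])
    have alpha': "w k \<bullet> theta H \<Sigma> y J v0 \<epsilon> i j \<omega> =
       (a k + dk k * (\<Sum>l<i. Z k l \<omega>)) / (1 + real i * dk k)" if k: "k \<in> {1..r}" for k i \<omega>
      unfolding a_def Z_def by (rule alpha[OF k])
    show "(\<lambda>i. measure M {\<omega> \<in> space M.
            norm ((\<Sigma> ** (\<Sum>k=1..r. outer (w k) (w k))) *v theta H \<Sigma> y J v0 \<epsilon> i j \<omega>)
              \<ge> \<epsilon>' / real i powr p}) \<longlonglongrightarrow> 0"
      if pe: "0 < p \<and> p < 1/2 \<and> \<epsilon>' > 0" for p \<epsilon>'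
    proof -
      define R where "R = 1 + (\<Sum>k=1..r. norm (\<Sigma> *v w k))"
      have R1: "R \<ge> 1" unfolding R_def by (simp add: sum_nonneg)
      define c where "c = \<epsilon>' / R"
      have c: "c > 0" unfolding c_def using pe R1 by simp
      define B where "B k i = {\<omega> \<in> space M. c / real i powr p \<le> \<bar>(a k + dk k * (\<Sum>l<i. Z k l \<omega>)) / (1 + real i * dk k)\<bar>}" for k i
      have Bm: "B k i \<in> sets M" for k i unfolding B_def by measurable
      have Bl: "(\<lambda>i. P.prob (B k i)) \<longlonglongrightarrow> 0" if k: "k \<in> {1..r}" for k
        unfolding B_def
        by (rule P.alpha_prob[OF ind int4 mean0 mom2 mom4 dpos[OF k] c]) (use pe in auto)
      have sl: "(\<lambda>i. \<Sum>k\<in>{1..r}. P.prob (B k i)) \<longlonglongrightarrow> 0"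
        by (rule tendsto_null_sum) (rule Bl)
      show ?thesis
      proof (rule tendsto_sandwich[OF _ _ tendsto_const sl])
        show "eventually (\<lambda>i. 0 \<le> measure M {\<omega> \<in> space M.
            norm ((\<Sigma> ** (\<Sum>k=1..r. outer (w k) (w k))) *v theta H \<Sigma> y J v0 \<epsilon> i j \<omega>)
              \<ge> \<epsilon>' / real i powr p}) sequentially" by simp
        show "eventually (\<lambda>i. measure M {\<omega> \<in> space M.
            norm ((\<Sigma> ** (\<Sum>k=1..r. outer (w k) (w k))) *v theta H \<Sigma> y J v0 \<epsilon> i j \<omega>)
              \<ge> \<epsilon>' / real i powr p} \<le> (\<Sum>k\<in>{1..r}. P.prob (B k i))) sequentially"
          using eventually_ge_at_top[of "1::nat"]
        proof eventually_elim
          case (elim i)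
          have ip: "real i powr p > 0" using elim by simp
          have sub: "{\<omega> \<in> space M.
            norm ((\<Sigma> ** (\<Sum>k=1..r. outer (w k) (w k))) *v theta H \<Sigma> y J v0 \<epsilon> i j \<omega>)
              \<ge> \<epsilon>' / real i powr p} \<subseteq> (\<Union>k\<in>{1..r}. B k i)"
          proof
            fix \<omega> assume \<omega>: "\<omega> \<in> {\<omega> \<in> space M.
              norm ((\<Sigma> ** (\<Sum>k=1..r. outer (w k) (w k))) *v theta H \<Sigma> y J v0 \<epsilon> i j \<omega>)
                \<ge> \<epsilon>' / real i powr p}"
            show "\<omega> \<in> (\<Union>k\<in>{1..r}. B k i)"
            proof (rule ccontr)
              assume nB: "\<omega> \<notin> (\<Union>k\<in>{1..r}. B k i)"
              have lt: "\<bar>w k \<bullet> theta H \<Sigma> y J v0 \<epsilon> i j \<omega>\<bar> < c / real i powr p" if k: "k \<in> {1..r}" for k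
              proof -
                have "\<omega> \<notin> B k i" using nB k by blast
                then show ?thesis using \<omega> unfolding B_def alpha'[OF k] by (simp add: not_le)
              qed
              have "norm ((\<Sigma> ** (\<Sum>k=1..r. outer (w k) (w k))) *v theta H \<Sigma> y J v0 \<epsilon> i j \<omega>)
                  \<le> (\<Sum>k=1..r. \<bar>w k \<bullet> theta H \<Sigma> y J v0 \<epsilon> i j \<omega>\<bar> * norm (\<Sigma> *v w k))"
                unfolding proj by (rule order_trans[OF norm_sum]) simp
              also have "\<dots> \<le> (\<Sum>k=1..r. c / real i powr p * norm (\<Sigma> *v w k))"
                using lt by (intro sum_mono mult_right_mono) (auto intro: less_imp_le)
              also have "\<dots> = c / real i powr p * (R - 1)"
                unfolding R_def by (simp add: sum_distrib_left)
              also have "\<dots> < c / real i powr p * R"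
                using c ip by (intro mult_strict_left_mono) auto
              also have "\<dots> = \<epsilon>' / real i powr p" unfolding c_def using R1 by simp
              finally show False using \<omega> by simp
            qed
          qed
          have "measure M {\<omega> \<in> space M.
            norm ((\<Sigma> ** (\<Sum>k=1..r. outer (w k) (w k))) *v theta H \<Sigma> y J v0 \<epsilon> i j \<omega>)
              \<ge> \<epsilon>' / real i powr p} \<le> measure M (\<Union>k\<in>{1..r}. B k i)"
            by (rule P.finite_measure_mono[OF sub]) (auto intro: Bm)
          also have "\<dots> \<le> (\<Sum>k\<in>{1..r}. measure M (B k i))"
            by (rule measure_UNION_le) (auto intro: Bm)
          finally show ?case .
        qed
      qed
    qed
    have AEk: "AE \<omega> in M. (\<lambda>i. w k \<bullet> theta H \<Sigma> y J v0 \<epsilon> i j \<omega>) \<longlonglongrightarrow> 0" if k: "k \<in> {1..r}" for k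
      unfolding alpha'[OF k] by (rule P.alpha_AE[OF ind int4 mean0 mom2 mom4 dpos[OF k]])
    have "AE \<omega> in M. \<forall>k\<in>{1..r}. (\<lambda>i. w k \<bullet> theta H \<Sigma> y J v0 \<epsilon> i j \<omega>) \<longlonglongrightarrow> 0"
      by (rule AE_finite_allI) (auto intro: AEk)
    then show "AE \<omega> in M. (\<lambda>i. (\<Sigma> ** (\<Sum>k=1..r. outer (w k) (w k))) *v theta H \<Sigma> y J v0 \<epsilon> i j \<omega>)
            \<longlonglongrightarrow> 0"
    proof (rule AE_mp, intro AE_I2 impI)
      fix \<omega> assume L: "\<forall>k\<in>{1..r}. (\<lambda>i. w k \<bullet> theta H \<Sigma> y J v0 \<epsilon> i j \<omega>) \<longlonglongrightarrow> 0"
      have "(\<lambda>i. \<Sum>k\<in>{1..r}. (w k \<bullet> theta H \<Sigma> y J v0 \<epsilon> i j \<omega>) *\<^sub>R (\<Sigma> *v w k)) \<longlonglongrightarrow> 0"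
      proof (rule tendsto_null_sum)
        fix k assume k: "k \<in> {1..r}"
        show "(\<lambda>i. (w k \<bullet> theta H \<Sigma> y J v0 \<epsilon> i j \<omega>) *\<^sub>R (\<Sigma> *v w k)) \<longlonglongrightarrow> 0"
          using tendsto_scaleR[OF L[rule_format, OF k] tendsto_const[of "\<Sigma> *v w k"]] by simp
      qed
      then show "(\<lambda>i. (\<Sigma> ** (\<Sum>k=1..r. outer (w k) (w k))) *v theta H \<Sigma> y J v0 \<epsilon> i j \<omega>) \<longlonglongrightarrow> 0"
        unfolding proj .
    qed
  qed
qed

end
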